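(* Assume that every $f_m^j$ ($m\in[M]$, $j\in\{0,\dots,N-1\}$) is $\mu$-strongly convex with $\mu>0$ and $L$-smooth. Run the algorithm RR-CLI described in the context with client step size $0<\gamma\le \frac1L$, server step size $\eta=\gamma N$ and global step size $\theta=\eta R$. Then the iterates satisfy $$\mathbb{E}\big[\|x_T-x_\star\|^2\big]\le (1-\gamma\mu)^{NRT}\|x_0-x_\star\|^2+\frac{2\gamma^2}{\mu}\max_{t,r,m,j}\sigma^2_{m,\mathrm{DS}}(t,r,j),$$ where the maximum is over meta-epochs $t$, rounds $r\in\{0,\dots,R-1\}$, clients $m\in S_t^{\lambda_r}$ and $j\in\{0,\dots,N-1\}$, and $\sigma^2_{m,\mathrm{DS}}(t,r,j)$ is defined in the context.
   Context: Setting. There are $M$ clients, each holding $N$ data points. For $m\in[M]$ and $j\in\{0,\dots,N-1\}$, $f_m^j:\mathbb{R}^d\to\mathbb{R}$ is differentiable. Define $f_m=\frac1N\sum_j f_m^j$ and $f=\frac1M\sum_{m=1}^M f_m$, and let $x_\star$ be a minimizer of $f$. A function $h$ is $L$-smooth if $\|\nabla h(x)-\nabla h(y)\|\le L\|x-y\|$ for all $x,y$. It is $\mu$-strongly convex if $\langle\nabla h(x),y-x\rangle\le-(h(x)-h(y)+\frac\mu2\|x-y\|^2)$ for all $x,y$. The Bregman divergence is $D_h(x,y)=h(x)-h(y)-\langle\nabla h(y),x-y\rangle$. Algorithm RR-CLI. The inputs are a cohort size $C$ with $M=CR$ for an integer $R$, step sizes $\gamma,\eta,\theta>0$, an initial point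 $x_0\in\mathbb{R}^d$, and a number of meta-epochs $T\ge1$. In each meta-epoch $t=0,\dots,T-1$: - The $M$ clients are partitioned uniformly at random into $R$ disjoint cohorts of size $C$, taken in a uniformly random order $S_t^{\lambda_0},\dots,S_t^{\lambda_{R-1}}$. - Each client $m$ uses a uniformly random permutation $\pi_m=(\pi_m^0,\dots,\pi_m^{N-1})$ of its data indices. - All permutations are independent. They are either sampled once before the first meta-epoch and reused, or resampled independently at every meta-epoch; the result holds for either option. - Set $x_t^0=x_t$. For $r=0,\dots,R-1$, each client $m\in S_t^{\lambda_r}$ sets $x^{r,0}_{m,t}=x^r_t$ and computes $x^{r,j+1}_{m,t}=x^{r,j}_{m,t}-\gamma\nabla f_m^{\pi_m^j}(x^{r,j}_{m,t})$ for $j=0,\dots,N-1$, followed by $g^r_{m,t}=\frac{1}{\gamma N}(x^r_t-x^{r,N}_{m,t})$. - The server sets $g^r_t=\frac1C\sum_{m\in S_t^{\lambda_r}}g^r_{m,t}$ and $x^{r+1}_t=x^r_t-\eta g^r_t$. - Finally, $x_{t+1}=x_t-\theta\frac{x_t-x^R_t}{\eta R}$. Expectations are over the random permutations. Star sequence. In meta-epoch $t$, using the same cohorts and permutations as the algorithm, define $x^0_\star=x_\star$. For each $r$ and each $m\in S_t^{\lambda_r}$, set $x^{r,0}_{m,\star}=x^r_\star$, then $x^{r,j+1}_{m,\star}=x^{r,j}_{m,\star}-\gamma\nabla f_m^{\pi_m^j}(x_\star)$, and $x^{r+1}_\star=\frac1C\sum_{m\in S_t^{\lambda_r}}x^{r,N}_{m,\star}$.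 Finally set $\sigma^2_{m,\mathrm{DS}}(t,r,j)=\frac{1}{\gamma^2}\mathbb{E}\big[D_{f_m^{\pi_m^j}}(x^{r,j}_{m,\star},x_\star)\big]$. *)

theory Defs
  imports "HOL-Analysis.Analysis" "HOL-Combinatorics.Permutations"
begin

definition L_smooth :: "real \<Rightarrow> ('a::real_inner \<Rightarrow> 'a) \<Rightarrow> bool" where
  "L_smooth L g \<longleftrightarrow> (\<forall>x y. norm (g x - g y) \<le> L * norm (x - y))"

definition strongly_convex_grad :: "real \<Rightarrow> ('a::real_inner \<Rightarrow> real) \<Rightarrow> ('a \<Rightarrow> 'a) \<Rightarrow> bool" where
  "strongly_convex_grad \<mu> h g \<longleftrightarrow>
     (\<forall>x y. inner (g x) (y - x) \<le> - (h x - h y + \<mu> / 2 * (norm (x - y))\<^sup>2))"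

definition bregman :: "('a::real_inner \<Rightarrow> real) \<Rightarrow> ('a \<Rightarrow> 'a) \<Rightarrow> 'a \<Rightarrow> 'a \<Rightarrow> real" where
  "bregman h g x y = h x - h y - inner (g y) (x - y)"

text \<open>One meta-epoch outcome is a pair (sigma, pi): sigma is a permutation of the
clients {0..<M}; cohort r (in the random order) is the image of the block
{r*C..<r*C+C} under sigma, which gives a uniformly random partition into R cohorts of
size C taken in a uniformly random order.  pi m is the data permutation of client m.
Uniform sampling of all of these independently is the uniform distribution on the
finite set epoch_outcomes M N.\<close>

definition epoch_outcomes :: "nat \<Rightarrow> nat \<Rightarrow> ((nat \<Rightarrow> nat) \<times> (nat \<Rightarrow> nat \<Rightarrow> nat)) set" where
  "epoch_outcomes M N = {(\<sigma>, \<pi>). \<sigma> permutes {..<M} \<and>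
       (\<forall>m<M. \<pi> m permutes {..<N}) \<and> (\<forall>m\<ge>M. \<pi> m = id)}"

definition cohort :: "nat \<Rightarrow> (nat \<Rightarrow> nat) \<Rightarrow> nat \<Rightarrow> nat set" where
  "cohort C \<sigma> r = \<sigma> ` {r * C..<r * C + C}"

definition avg :: "'w set \<Rightarrow> ('w \<Rightarrow> real) \<Rightarrow> real" where
  "avg \<Omega> F = (\<Sum>w\<in>\<Omega>. F w) / real (card \<Omega>)"

text \<open>gr m j is the gradient of f_m^j.  Local iterate x^{r,j}_{m,t} for client m
started at x with data permutation p.\<close>
primrec local_iter :: "(nat \<Rightarrow> nat \<Rightarrow> 'a::real_vector \<Rightarrow> 'a) \<Rightarrow> real \<Rightarrow> (nat \<Rightarrow> nat) \<Rightarrow> nat \<Rightarrow> 'a \<Rightarrow> nat \<Rightarrow> 'a" where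
  "local_iter gr \<gamma> p m x 0 = x"
| "local_iter gr \<gamma> p m x (Suc j) =
     local_iter gr \<gamma> p m x j - \<gamma> *\<^sub>R gr m (p j) (local_iter gr \<gamma> p m x j)"

primrec round_iter :: "(nat \<Rightarrow> nat \<Rightarrow> 'a::real_vector \<Rightarrow> 'a) \<Rightarrow> real \<Rightarrow> real \<Rightarrow> nat \<Rightarrow> nat \<Rightarrow>
    (nat \<Rightarrow> nat) \<times> (nat \<Rightarrow> nat \<Rightarrow> nat) \<Rightarrow> 'a \<Rightarrow> nat \<Rightarrow> 'a" where
  "round_iter gr \<gamma> \<eta> N C \<omega> x 0 = x"
| "round_iter gr \<gamma> \<eta> N C \<omega> x (Suc r) =
     (let y = round_iter gr \<gamma> \<eta> N C \<omega> x r;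
          g = (1 / real C) *\<^sub>R (\<Sum>m\<in>cohort C (fst \<omega>) r.
                 (1 / (\<gamma> * real N)) *\<^sub>R (y - local_iter gr \<gamma> (snd \<omega> m) m y N))
      in y - \<eta> *\<^sub>R g)"

definition epoch_step :: "(nat \<Rightarrow> nat \<Rightarrow> 'a::real_vector \<Rightarrow> 'a) \<Rightarrow> real \<Rightarrow> real \<Rightarrow> real \<Rightarrow> nat \<Rightarrow> nat \<Rightarrow> nat \<Rightarrow>
    (nat \<Rightarrow> nat) \<times> (nat \<Rightarrow> nat \<Rightarrow> nat) \<Rightarrow> 'a \<Rightarrow> 'a" where
  "epoch_step gr \<gamma> \<eta> \<theta> N C R \<omega> x =
     x - \<theta> *\<^sub>R ((1 / (\<eta> * real R)) *\<^sub>R (x - round_iter gr \<gamma> \<eta> N C \<omega> x R))"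

primrec rrcli :: "(nat \<Rightarrow> nat \<Rightarrow> 'a::real_vector \<Rightarrow> 'a) \<Rightarrow> real \<Rightarrow> real \<Rightarrow> real \<Rightarrow> nat \<Rightarrow> nat \<Rightarrow> nat \<Rightarrow>
    (nat \<Rightarrow> (nat \<Rightarrow> nat) \<times> (nat \<Rightarrow> nat \<Rightarrow> nat)) \<Rightarrow> 'a \<Rightarrow> nat \<Rightarrow> 'a" where
  "rrcli gr \<gamma> \<eta> \<theta> N C R ws x0 0 = x0"
| "rrcli gr \<gamma> \<eta> \<theta> N C R ws x0 (Suc t) =
     epoch_step gr \<gamma> \<eta> \<theta> N C R (ws t) (rrcli gr \<gamma> \<eta> \<theta> N C R ws x0 t)"

primrec star_local :: "(nat \<Rightarrow> nat \<Rightarrow> 'a::real_vector \<Rightarrow> 'a) \<Rightarrow> real \<Rightarrow> 'a \<Rightarrow> (nat \<Rightarrow> nat) \<Rightarrow> nat \<Rightarrow> 'a \<Rightarrow> nat \<Rightarrow> 'a" where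
  "star_local gr \<gamma> xs p m x 0 = x"
| "star_local gr \<gamma> xs p m x (Suc j) = star_local gr \<gamma> xs p m x j - \<gamma> *\<^sub>R gr m (p j) xs"

primrec star_round :: "(nat \<Rightarrow> nat \<Rightarrow> 'a::real_vector \<Rightarrow> 'a) \<Rightarrow> real \<Rightarrow> 'a \<Rightarrow> nat \<Rightarrow> nat \<Rightarrow>
    (nat \<Rightarrow> nat) \<times> (nat \<Rightarrow> nat \<Rightarrow> nat) \<Rightarrow> nat \<Rightarrow> 'a" where
  "star_round gr \<gamma> xs N C \<omega> 0 = xs"
| "star_round gr \<gamma> xs N C \<omega> (Suc r) =
     (1 / real C) *\<^sub>R (\<Sum>m\<in>cohort C (fst \<omega>) r.
        star_local gr \<gamma> xs (snd \<omega> m) m (star_round gr \<gamma> xs N C \<omega> r) N)"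

text \<open>sigma^2_{m,DS}(t,r,j): (1/gamma^2) times the expectation of
D_{f_m^{pi_m^j}}(x^{r,j}_{m,star}, x_star), taken over the meta-epoch outcome
conditionally on the event that client m belongs to the r-th cohort
(the only event on which x^{r,j}_{m,star} is defined).  The law of the meta-epoch
outcome is the same uniform law for every t, so the quantity does not depend on t.\<close>
definition sigma2_DS :: "(nat \<Rightarrow> nat \<Rightarrow> 'a::real_inner \<Rightarrow> real) \<Rightarrow> (nat \<Rightarrow> nat \<Rightarrow> 'a \<Rightarrow> 'a) \<Rightarrow> real \<Rightarrow> 'a \<Rightarrow>
    nat \<Rightarrow> nat \<Rightarrow> nat \<Rightarrow> nat \<Rightarrow> nat \<Rightarrow> nat \<Rightarrow> real" where
  "sigma2_DS f gr \<gamma> xs M N C m r j =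
     (1 / \<gamma>\<^sup>2) * avg {\<omega> \<in> epoch_outcomes M N. m \<in> cohort C (fst \<omega>) r}
        (\<lambda>\<omega>. bregman (f m (snd \<omega> m j)) (gr m (snd \<omega> m j))
                (star_local gr \<gamma> xs (snd \<omega> m) m (star_round gr \<gamma> xs N C \<omega> r) j) xs)"

end

theory Submission
  imports Defs
begin


lemma line_deriv:
  fixes h :: "'a::real_inner \<Rightarrow> real"
  assumes "\<And>z. GDERIV h z :> g z"
  shows "((\<lambda>t. h (x + t *\<^sub>R d)) has_real_derivative inner d (g (x + t *\<^sub>R d))) (at t)"
proof -
  have l: "((\<lambda>t. x + t *\<^sub>R d) has_derivative (\<lambda>s. s *\<^sub>R d)) (at t)"
    by (auto intro!: derivative_eq_intros)
  have "(h has_derivative (\<lambda>v. inner v (g (x + t *\<^sub>R d)))) (at (x + t *\<^sub>R d))"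
    using assms[of "x + t *\<^sub>R d"] by (simp add: gderiv_def)
  from has_derivative_compose[OF l this] show ?thesis
    unfolding has_field_derivative_def by (rule has_derivative_eq_rhs) (auto simp: fun_eq_iff)
qed

lemma descent:
  fixes h :: "'a::real_inner \<Rightarrow> real"
  assumes gd: "\<And>z. GDERIV h z :> g z" and sm: "L_smooth L g"
  shows "h y \<le> h x + inner (g x) (y - x) + L/2 * (norm (y-x))^2"
proof -
  define d where "d = y - x"
  define \<psi> where "\<psi> t = t * inner (g x) d + L/2 * t^2 * (norm d)^2 - h (x + t *\<^sub>R d)" for t
  have "\<psi> 0 \<le> \<psi> 1"
  proof (rule DERIV_nonneg_imp_nondecreasing[of 0 1])
    fix t :: real assume t: "0 \<le> t" "t \<le> 1"
    have D: "(\<psi> has_real_derivative (inner (g x) d + L * t * (norm d)^2 - inner d (g (x + t *\<^sub>R d)))) (at t)"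
      unfolding \<psi>_def
      by (auto intro!: derivative_eq_intros line_deriv[OF gd] simp: power2_eq_square)
    have "inner (g (x + t *\<^sub>R d) - g x) d \<le> norm (g (x + t *\<^sub>R d) - g x) * norm d"
      by (rule norm_cauchy_schwarz)
    also have "\<dots> \<le> (L * norm (t *\<^sub>R d)) * norm d"
    proof (rule mult_right_mono)
      show "norm (g (x + t *\<^sub>R d) - g x) \<le> L * norm (t *\<^sub>R d)"
        using sm unfolding L_smooth_def by (metis add_diff_cancel_left')
    qed simp
    also have "\<dots> = L * t * (norm d)^2" using t by (simp add: power2_eq_square)
    finally have "inner (g (x + t *\<^sub>R d)) d - inner (g x) d \<le> L * t * (norm d)^2"
      by (simp add: inner_diff_left)
    then show "\<exists>y. (\<psi> has_real_derivative y) (at t) \<and> 0 \<le> y"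
      using D by (intro exI[of _ "inner (g x) d + L * t * (norm d)^2 - inner d (g (x + t *\<^sub>R d))"])
        (auto simp: inner_commute)
  qed simp
  then show ?thesis unfolding \<psi>_def d_def by simp
qed

lemma sc_ineq:
  assumes "strongly_convex_grad \<mu> h g"
  shows "inner (g x) (y - x) \<le> - (h x - h y + \<mu> / 2 * (norm (x - y))\<^sup>2)"
  using assms unfolding strongly_convex_grad_def by blast

lemma bregman_lb:
  assumes "strongly_convex_grad \<mu> h g"
  shows "bregman h g x y \<ge> \<mu> / 2 * (norm (x - y))\<^sup>2"
  using sc_ineq[OF assms, of y x] unfolding bregman_def by (simp add: norm_minus_commute)

lemma bregman_nonneg:
  assumes "strongly_convex_grad \<mu> h g" "\<mu> \<ge> 0"
  shows "bregman h g x y \<ge> 0"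
proof -
  have "0 \<le> \<mu> / 2 * (norm (x - y))\<^sup>2" using assms(2) by simp
  then show ?thesis using bregman_lb[OF assms(1), of x y] by linarith
qed

lemma cocoercive:
  fixes h :: "'a::real_inner \<Rightarrow> real"
  assumes gd: "\<And>z. GDERIV h z :> g z" and sm: "L_smooth L g" and L: "L > 0"
    and sc: "strongly_convex_grad \<mu> h g" and mu: "\<mu> \<ge> 0"
  shows "bregman h g x xs \<ge> (norm (g x - g xs))\<^sup>2 / (2 * L)"
proof -
  define u where "u = g x - g xs"
  define z where "z = x - (1/L) *\<^sub>R u"
  have d: "h z \<le> h x + inner (g x) (z - x) + L/2 * (norm (z - x))^2"
    by (rule descent[OF gd sm])
  have c: "h xs + inner (g xs) (z - xs) \<le> h z"
    using bregman_nonneg[OF sc mu, of z xs] unfolding bregman_def by simp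
  have zx: "z - x = - (1/L) *\<^sub>R u" unfolding z_def by simp
  have zxs: "z - xs = (x - xs) - (1/L) *\<^sub>R u" unfolding z_def by simp
  have "h xs + inner (g xs) (x - xs) - (1/L) * inner (g xs) u
        \<le> h x - (1/L) * inner (g x) u + L/2 * ((1/L)^2 * (norm u)^2)"
  proof -
    have i1: "inner (g x) (z - x) = - (1/L) * inner (g x) u" unfolding zx by simp
    have i2: "inner (g xs) (z - xs) = inner (g xs) (x - xs) - (1/L) * inner (g xs) u"
      unfolding zxs by (simp add: inner_diff_right)
    have i3: "(norm (z - x))^2 = (1/L)^2 * (norm u)^2" unfolding zx using L
      by (simp add: power_divide)
    show ?thesis using d c unfolding i1 i2 i3 by linarith
  qed
  also have "L/2 * ((1/L)^2 * (norm u)^2) = (norm u)^2 / (2*L)"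
    using L by (simp add: power2_eq_square field_simps)
  finally have "h xs + inner (g xs) (x - xs) + (1/L) * inner u u - (norm u)^2 / (2*L) \<le> h x"
    unfolding u_def by (simp add: inner_diff_left algebra_simps)
  moreover have "(1/L) * inner u u - (norm u)^2 / (2*L) = (norm u)^2 / (2*L)"
    using L by (simp add: power2_norm_eq_inner field_simps)
  ultimately have "h xs + inner (g xs) (x - xs) + (norm u)^2 / (2*L) \<le> h x"
    by linarith
  then show ?thesis unfolding bregman_def u_def by simp
qed

lemma one_step:
  fixes h :: "'a::real_inner \<Rightarrow> real"
  assumes gd: "\<And>z. GDERIV h z :> g z" and sm: "L_smooth L g" and L: "L > 0"
    and sc: "strongly_convex_grad \<mu> h g" and mu: "\<mu> \<ge> 0"
    and gam: "\<gamma> > 0" "\<gamma> \<le> 1 / L"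
  shows "(norm ((x - \<gamma> *\<^sub>R g x) - (y - \<gamma> *\<^sub>R g xs)))\<^sup>2
         \<le> (1 - \<gamma> * \<mu>) * (norm (x - y))\<^sup>2 + 2 * \<gamma> * bregman h g y xs"
proof -
  define d where "d = x - y"
  define u where "u = g x - g xs"
  have e: "(x - \<gamma> *\<^sub>R g x) - (y - \<gamma> *\<^sub>R g xs) = d - \<gamma> *\<^sub>R u"
    unfolding d_def u_def by (simp add: algebra_simps)
  have n: "(norm (d - \<gamma> *\<^sub>R u))\<^sup>2 = (norm d)^2 - 2 * \<gamma> * inner u d + \<gamma>^2 * (norm u)^2"
    unfolding power2_norm_eq_inner by (simp add: inner_diff_left inner_diff_right inner_commute power2_eq_square algebra_simps)
  have tp: "inner u d = bregman h g y x + bregman h g x xs - bregman h g y xs"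
    unfolding u_def d_def bregman_def by (simp add: inner_diff_left inner_diff_right inner_commute)
  have b1: "bregman h g y x \<ge> \<mu>/2 * (norm d)^2"
    using bregman_lb[OF sc, of y x] unfolding d_def by (simp add: norm_minus_commute)
  have b2: "bregman h g x xs \<ge> (norm u)^2 / (2 * L)"
    unfolding u_def by (rule cocoercive[OF gd sm L sc mu])
  have gl: "\<gamma> * L \<le> 1" using gam L by (simp add: field_simps)
  have "\<gamma>^2 * (norm u)^2 \<le> \<gamma> * ((norm u)^2 / L)"
  proof -
    have "\<gamma>^2 * (norm u)^2 = \<gamma> * (\<gamma> * L) * ((norm u)^2 / L)" using L by (simp add: power2_eq_square field_simps)
    also have "\<dots> \<le> \<gamma> * 1 * ((norm u)^2 / L)"
      using gl gam L by (intro mult_right_mono mult_left_mono) auto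
    finally show ?thesis by simp
  qed
  moreover have "2 * \<gamma> * bregman h g x xs \<ge> \<gamma> * ((norm u)^2 / L)"
  proof -
    have "2 * \<gamma> * bregman h g x xs \<ge> 2 * \<gamma> * ((norm u)^2 / (2 * L))"
      by (rule mult_left_mono[OF b2]) (use gam in simp)
    also have "2 * \<gamma> * ((norm u)^2 / (2 * L)) = \<gamma> * ((norm u)^2 / L)" using L by simp
    finally show ?thesis .
  qed
  moreover have "2 * \<gamma> * bregman h g y x \<ge> \<gamma> * \<mu> * (norm d)^2"
  proof -
    have "2 * \<gamma> * bregman h g y x \<ge> 2 * \<gamma> * (\<mu>/2 * (norm d)^2)"
      by (rule mult_left_mono[OF b1]) (use gam in simp)
    then show ?thesis by simp
  qed
  ultimately show ?thesis unfolding e n tp by (simp add: algebra_simps flip: d_def)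
qed

lemma rec_bound:
  fixes e b :: "nat \<Rightarrow> real"
  assumes q: "q \<ge> 0" and st: "\<And>n. n < k \<Longrightarrow> e (Suc n) \<le> q * e n + b n"
  shows "e k \<le> q^k * e 0 + (\<Sum>j<k. q^(k - Suc j) * b j)"
  using st
proof (induction k)
  case 0
  then show ?case by simp
next
  case (Suc k)
  have ih: "e k \<le> q^k * e 0 + (\<Sum>j<k. q^(k - Suc j) * b j)" using Suc by simp
  have "e (Suc k) \<le> q * e k + b k" using Suc by simp
  also have "\<dots> \<le> q * (q^k * e 0 + (\<Sum>j<k. q^(k - Suc j) * b j)) + b k"
    using ih q by (simp add: mult_left_mono)
  also have "\<dots> = q^(Suc k) * e 0 + ((\<Sum>j<k. q * (q^(k - Suc j) * b j)) + b k)"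
    by (simp add: algebra_simps sum_distrib_left)
  also have "(\<Sum>j<k. q * (q^(k - Suc j) * b j)) = (\<Sum>j<k. q^(Suc k - Suc j) * b j)"
  proof (rule sum.cong)
    fix j assume "j \<in> {..<k}"
    then have "Suc k - Suc j = Suc (k - Suc j)" by auto
    then show "q * (q^(k - Suc j) * b j) = q^(Suc k - Suc j) * b j" by simp
  qed simp
  finally show ?case by simp
qed

lemma norm_avg_sq:
  fixes v :: "nat \<Rightarrow> 'a::real_normed_vector"
  assumes "card A = C" "C > 0"
  shows "(norm ((1 / real C) *\<^sub>R (\<Sum>m\<in>A. v m)))\<^sup>2 \<le> (1 / real C) * (\<Sum>m\<in>A. (norm (v m))\<^sup>2)"
proof -
  have "(norm (\<Sum>m\<in>A. v m))\<^sup>2 \<le> (\<Sum>m\<in>A. norm (v m))\<^sup>2"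
    by (intro power_mono norm_sum) auto
  also have "\<dots> \<le> (\<Sum>m\<in>A. (norm (v m))\<^sup>2) * real C"
    using sum_squared_le_sum_of_squares[of "\<lambda>m. norm (v m)" A] assms by simp
  finally have "(norm (\<Sum>m\<in>A. v m))\<^sup>2 \<le> (\<Sum>m\<in>A. (norm (v m))\<^sup>2) * real C" .
  then show ?thesis using assms
    by (simp add: power_mult_distrib power2_eq_square field_simps)
qed

lemma mu_le_L:
  fixes h :: "'a::euclidean_space \<Rightarrow> real"
  assumes sc: "strongly_convex_grad \<mu> h g" and sm: "L_smooth L g"
  shows "\<mu> \<le> L"
proof -
  obtain v :: 'a where v: "v \<in> Basis" using nonempty_Basis by blast
  then have vn: "norm v = 1" by simp
  have a: "inner (g v) (0 - v) \<le> - (h v - h 0 + \<mu> / 2 * (norm (v - 0))\<^sup>2)"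
    by (rule sc_ineq[OF sc])
  have b: "inner (g 0) (v - 0) \<le> - (h 0 - h v + \<mu> / 2 * (norm (0 - v))\<^sup>2)"
    by (rule sc_ineq[OF sc])
  have "\<mu> \<le> inner (g v - g 0) v" using a b vn by (simp add: inner_diff_left inner_diff_right)
  also have "\<dots> \<le> norm (g v - g 0) * norm v" by (rule norm_cauchy_schwarz)
  also have "\<dots> \<le> L * norm (v - 0) * norm v"
  proof -
    have "norm (g v - g 0) \<le> L * norm (v - 0)" using sm unfolding L_smooth_def by blast
    then show ?thesis using vn by simp
  qed
  finally show ?thesis using vn by simp
qed

lemma grad_zero:
  fixes f :: "nat \<Rightarrow> nat \<Rightarrow> 'a::real_inner \<Rightarrow> real"
  assumes grad: "\<And>m j x. m < M \<Longrightarrow> j < N \<Longrightarrow> GDERIV (f m j) x :> gr m j x"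
    and smooth: "\<And>m j. m < M \<Longrightarrow> j < N \<Longrightarrow> L_smooth L (gr m j)"
    and L: "L > 0" and M: "M > 0" and N: "N > 0"
    and xs_min: "\<And>y. (1 / real M) * (\<Sum>m<M. (1 / real N) * (\<Sum>j<N. f m j xs))
                  \<le> (1 / real M) * (\<Sum>m<M. (1 / real N) * (\<Sum>j<N. f m j y))"
  shows "(\<Sum>m<M. \<Sum>j<N. gr m j xs) = 0"
proof -
  define G where "G = (\<Sum>m<M. \<Sum>j<N. gr m j xs)"
  define S where "S y = (\<Sum>m<M. \<Sum>j<N. f m j y)" for y
  have Smin: "S xs \<le> S y" for y
  proof -
    have "(1 / real M) * (\<Sum>m<M. (1 / real N) * (\<Sum>j<N. f m j y)) = S y / (real M * real N)"
      unfolding S_def by (simp add: sum_divide_distrib[symmetric])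
    moreover have "(1 / real M) * (\<Sum>m<M. (1 / real N) * (\<Sum>j<N. f m j xs)) = S xs / (real M * real N)"
      unfolding S_def by (simp add: sum_divide_distrib[symmetric])
    ultimately have "S xs / (real M * real N) \<le> S y / (real M * real N)" using xs_min[of y] by simp
    then show ?thesis using M N by (simp add: divide_right_mono_neg divide_le_cancel)
  qed
  define t where "t = 1 / (real M * real N * L)"
  have tpos: "t > 0" unfolding t_def using M N L by simp
  have "S (xs - t *\<^sub>R G) \<le> (\<Sum>m<M. \<Sum>j<N. f m j xs + inner (gr m j xs) (- t *\<^sub>R G) + L/2 * (norm (- t *\<^sub>R G))^2)"
    unfolding S_def
  proof (intro sum_mono)
    fix m j assume "m \<in> {..<M}" "j \<in> {..<N}"
    then show "f m j (xs - t *\<^sub>R G) \<le> f m j xs + inner (gr m j xs) (- t *\<^sub>R G) + L/2 * (norm (- t *\<^sub>R G))^2"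
      using descent[OF grad smooth, of m j "xs - t *\<^sub>R G" xs] by simp
  qed
  also have "\<dots> = S xs - t * inner G G + real M * real N * (L/2 * t^2 * (norm G)^2)"
    unfolding S_def G_def
    by (simp add: sum.distrib inner_sum_left power_mult_distrib sum_subtractf sum_distrib_left mult.assoc)
  also have "real M * real N * (L/2 * t^2 * (norm G)^2) = t * (norm G)^2 / 2"
    unfolding t_def using M N L by (simp add: power2_eq_square field_simps)
  finally have "S (xs - t *\<^sub>R G) \<le> S xs - t * (norm G)^2 / 2"
    by (simp add: power2_norm_eq_inner)
  with Smin[of "xs - t *\<^sub>R G"] have "t * (norm G)^2 \<le> 0" by simp
  with tpos have "(norm G)^2 \<le> 0" by (simp add: mult_le_0_iff)
  then show ?thesis unfolding G_def by simp
qed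

lemma block_sum:
  fixes H :: "nat \<Rightarrow> 'b::comm_monoid_add"
  shows "(\<Sum>r<R. \<Sum>i\<in>{r * C..<r * C + C}. H i) = (\<Sum>i<R * C. H i)"
proof (induction R)
  case 0 then show ?case by simp
next
  case (Suc R)
  have "(\<Sum>i\<in>{0..<R*C+C}. H i) = (\<Sum>i\<in>{0..<R*C}. H i) + (\<Sum>i\<in>{R*C..<R*C+C}. H i)"
    by (rule sum.atLeastLessThan_concat[symmetric]) auto
  then have "(\<Sum>i<Suc R * C. H i) = (\<Sum>i\<in>{0..<R*C}. H i) + (\<Sum>i\<in>{R*C..<R*C+C}. H i)"
    by (simp add: atLeast0LessThan add.commute)
  then show ?case using Suc by (simp add: atLeast0LessThan)
qed

locale rr =
  fixes f :: "nat \<Rightarrow> nat \<Rightarrow> 'a::euclidean_space \<Rightarrow> real"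
    and gr :: "nat \<Rightarrow> nat \<Rightarrow> 'a \<Rightarrow> 'a"
    and M N C R :: nat and L \<mu> \<gamma> :: real and xs :: 'a
  assumes MCR: "M = C * R" and C_pos: "C > 0" and R_pos: "R > 0" and N_pos: "N > 0"
    and grad: "\<And>m j x. m < M \<Longrightarrow> j < N \<Longrightarrow> GDERIV (f m j) x :> gr m j x"
    and smooth: "\<And>m j. m < M \<Longrightarrow> j < N \<Longrightarrow> L_smooth L (gr m j)"
    and sconv: "\<And>m j. m < M \<Longrightarrow> j < N \<Longrightarrow> strongly_convex_grad \<mu> (f m j) (gr m j)"
    and mu_pos: "\<mu> > 0" and L_pos: "L > 0"
    and gamma_pos: "\<gamma> > 0" and gamma_le: "\<gamma> \<le> 1 / L" and gamma_mu: "\<gamma> * \<mu> \<le> 1"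
    and gzero: "(\<Sum>m<M. \<Sum>j<N. gr m j xs) = 0"
begin

definition "q = 1 - \<gamma> * \<mu>"
definition "\<Omega> = epoch_outcomes M N"

lemma q_nonneg: "q \<ge> 0" and q_lt1: "q < 1" using gamma_mu gamma_pos mu_pos by (auto simp: q_def)

lemma omega_perm: "\<omega> \<in> \<Omega> \<Longrightarrow> fst \<omega> permutes {..<M}"
  and omega_pi: "\<omega> \<in> \<Omega> \<Longrightarrow> m < M \<Longrightarrow> snd \<omega> m permutes {..<N}"
  unfolding \<Omega>_def epoch_outcomes_def by auto

lemma pi_lt: "\<omega> \<in> \<Omega> \<Longrightarrow> m < M \<Longrightarrow> j < N \<Longrightarrow> snd \<omega> m j < N"
  using omega_pi permutes_in_image by fastforce

lemma cohort_sub: assumes "\<omega> \<in> \<Omega>" "r < R" shows "cohort C (fst \<omega>) r \<subseteq> {..<M}"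
proof
  fix m assume "m \<in> cohort C (fst \<omega>) r"
  then obtain i where i: "i \<in> {r * C..<r * C + C}" "m = fst \<omega> i" unfolding cohort_def by auto
  have "r * C + C \<le> R * C" using assms(2)
    by (metis add.commute mult_Suc less_eq_Suc_le mult_le_mono1)
  then have "i < M" using i MCR by (auto simp: mult.commute)
  then show "m \<in> {..<M}" using i permutes_in_image[OF omega_perm[OF assms(1)]] by auto
qed

lemma cohort_card: assumes "\<omega> \<in> \<Omega>" shows "card (cohort C (fst \<omega>) r) = C"
proof -
  have "inj (fst \<omega>)" using omega_perm[OF assms] permutes_inj by blast
  then show ?thesis unfolding cohort_def by (simp add: card_image inj_on_subset)
qed

lemma cohort_mem_lt: "\<omega> \<in> \<Omega> \<Longrightarrow> r < R \<Longrightarrow> m \<in> cohort C (fst \<omega>) r \<Longrightarrow> m < M"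
  using cohort_sub by blast

lemma cohort_sum: assumes "\<omega> \<in> \<Omega>"
  shows "(\<Sum>r<R. \<Sum>m\<in>cohort C (fst \<omega>) r. H m) = (\<Sum>m<M. H m)"
proof -
  have inj: "inj (fst \<omega>)" using omega_perm[OF assms] permutes_inj by blast
  have "(\<Sum>r<R. \<Sum>m\<in>cohort C (fst \<omega>) r. H m) = (\<Sum>r<R. \<Sum>i\<in>{r * C..<r * C + C}. H (fst \<omega> i))"
    unfolding cohort_def by (rule sum.cong[OF refl]) (simp add: sum.reindex[OF inj_on_subset[OF inj]])
  also have "\<dots> = (\<Sum>i<R * C. H (fst \<omega> i))" by (rule block_sum)
  also have "\<dots> = (\<Sum>i<M. (H \<circ> fst \<omega>) i)" using MCR by (simp add: mult.commute)
  also have "\<dots> = (\<Sum>m<M. H m)" using sum.permute[OF omega_perm[OF assms], of H] by simp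
  finally show ?thesis .
qed

lemma step_mj:
  assumes "m < M" "k < N"
  shows "(norm ((x - \<gamma> *\<^sub>R gr m k x) - (y - \<gamma> *\<^sub>R gr m k xs)))\<^sup>2
         \<le> q * (norm (x - y))\<^sup>2 + 2 * \<gamma> * bregman (f m k) (gr m k) y xs"
  unfolding q_def
  by (rule one_step[OF grad[OF assms] smooth[OF assms] L_pos sconv[OF assms] _ gamma_pos gamma_le])
    (use mu_pos in simp)

definition D where
  "D \<omega> m r j = bregman (f m (snd \<omega> m j)) (gr m (snd \<omega> m j))
                (star_local gr \<gamma> xs (snd \<omega> m) m (star_round gr \<gamma> xs N C \<omega> r) j) xs"

lemma local_bound:
  assumes "m < M" and p: "\<And>j. j < N \<Longrightarrow> p j < N"
  shows "(norm (local_iter gr \<gamma> p m x N - star_local gr \<gamma> xs p m y N))\<^sup>2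
     \<le> q^N * (norm (x - y))\<^sup>2 + (\<Sum>j<N. q^(N - Suc j) *
          (2 * \<gamma> * bregman (f m (p j)) (gr m (p j)) (star_local gr \<gamma> xs p m y j) xs))"
  using rec_bound[OF q_nonneg, of N "\<lambda>n. (norm (local_iter gr \<gamma> p m x n - star_local gr \<gamma> xs p m y n))\<^sup>2"
     "\<lambda>j. 2 * \<gamma> * bregman (f m (p j)) (gr m (p j)) (star_local gr \<gamma> xs p m y j) xs"]
    step_mj[OF assms(1) p] by simp

lemma round_eq:
  assumes "\<omega> \<in> \<Omega>"
  shows "round_iter gr \<gamma> (\<gamma> * real N) N C \<omega> x (Suc r) =
     (1 / real C) *\<^sub>R (\<Sum>m\<in>cohort C (fst \<omega>) r.
        local_iter gr \<gamma> (snd \<omega> m) m (round_iter gr \<gamma> (\<gamma> * real N) N C \<omega> x r) N)"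
proof -
  define y where "y = round_iter gr \<gamma> (\<gamma> * real N) N C \<omega> x r"
  define A where "A = cohort C (fst \<omega>) r"
  define l where "l m = local_iter gr \<gamma> (snd \<omega> m) m y N" for m
  have cA: "card A = C" unfolding A_def using cohort_card[OF assms] .
  have gn: "\<gamma> * real N \<noteq> 0" using gamma_pos N_pos by simp
  have "round_iter gr \<gamma> (\<gamma> * real N) N C \<omega> x (Suc r) =
        y - (\<gamma> * real N) *\<^sub>R ((1 / real C) *\<^sub>R (\<Sum>m\<in>A. (1 / (\<gamma> * real N)) *\<^sub>R (y - l m)))"
    by (simp add: Let_def y_def A_def l_def)
  also have "(\<Sum>m\<in>A. (1 / (\<gamma> * real N)) *\<^sub>R (y - l m)) = (1 / (\<gamma> * real N)) *\<^sub>R (\<Sum>m\<in>A. (y - l m))"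
    by (simp add: scaleR_sum_right)
  also have "(\<gamma> * real N) *\<^sub>R ((1 / real C) *\<^sub>R ((1 / (\<gamma> * real N)) *\<^sub>R (\<Sum>m\<in>A. (y - l m))))
      = (1 / real C) *\<^sub>R (\<Sum>m\<in>A. (y - l m))" using gn by simp
  also have "(\<Sum>m\<in>A. (y - l m)) = real C *\<^sub>R y - (\<Sum>m\<in>A. l m)"
    by (simp add: sum_subtractf cA sum_constant_scaleR)
  also have "y - (1 / real C) *\<^sub>R (real C *\<^sub>R y - (\<Sum>m\<in>A. l m)) = (1 / real C) *\<^sub>R (\<Sum>m\<in>A. l m)"
    using C_pos by (simp add: scaleR_diff_right)
  finally show ?thesis unfolding A_def l_def y_def .
qed

definition \<beta> where
  "\<beta> \<omega> r = (1 / real C) * (\<Sum>m\<in>cohort C (fst \<omega>) r. \<Sum>j<N. q^(N - Suc j) * (2 * \<gamma> * D \<omega> m r j))"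

lemma round_bound:
  assumes "\<omega> \<in> \<Omega>" "r < R"
  shows "(norm (round_iter gr \<gamma> (\<gamma> * real N) N C \<omega> x (Suc r) - star_round gr \<gamma> xs N C \<omega> (Suc r)))\<^sup>2
    \<le> q^N * (norm (round_iter gr \<gamma> (\<gamma> * real N) N C \<omega> x r - star_round gr \<gamma> xs N C \<omega> r))\<^sup>2 + \<beta> \<omega> r"
proof -
  define y where "y = round_iter gr \<gamma> (\<gamma> * real N) N C \<omega> x r"
  define z where "z = star_round gr \<gamma> xs N C \<omega> r"
  define A where "A = cohort C (fst \<omega>) r"
  have cA: "card A = C" unfolding A_def using cohort_card[OF assms(1)] .
  have "round_iter gr \<gamma> (\<gamma> * real N) N C \<omega> x (Suc r) - star_round gr \<gamma> xs N C \<omega> (Suc r)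
      = (1 / real C) *\<^sub>R (\<Sum>m\<in>A. local_iter gr \<gamma> (snd \<omega> m) m y N - star_local gr \<gamma> xs (snd \<omega> m) m z N)"
    unfolding round_eq[OF assms(1)] by (simp add: y_def z_def A_def sum_subtractf scaleR_diff_right)
  then have "(norm (round_iter gr \<gamma> (\<gamma> * real N) N C \<omega> x (Suc r) - star_round gr \<gamma> xs N C \<omega> (Suc r)))\<^sup>2
     \<le> (1 / real C) * (\<Sum>m\<in>A. (norm (local_iter gr \<gamma> (snd \<omega> m) m y N - star_local gr \<gamma> xs (snd \<omega> m) m z N))\<^sup>2)"
    using norm_avg_sq[OF cA C_pos] by simp
  also have "\<dots> \<le> (1 / real C) * (\<Sum>m\<in>A. q^N * (norm (y - z))\<^sup>2 + (\<Sum>j<N. q^(N - Suc j) * (2 * \<gamma> * D \<omega> m r j)))"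
  proof (intro mult_left_mono sum_mono)
    fix m assume "m \<in> A"
    then have m: "m < M" using cohort_mem_lt[OF assms] unfolding A_def by blast
    show "(norm (local_iter gr \<gamma> (snd \<omega> m) m y N - star_local gr \<gamma> xs (snd \<omega> m) m z N))\<^sup>2
      \<le> q^N * (norm (y - z))\<^sup>2 + (\<Sum>j<N. q^(N - Suc j) * (2 * \<gamma> * D \<omega> m r j))"
      using local_bound[OF m pi_lt[OF assms(1) m]] unfolding D_def z_def by simp
  qed simp
  also have "\<dots> = q^N * (norm (y - z))\<^sup>2 + \<beta> \<omega> r"
    unfolding \<beta>_def A_def[symmetric] using cA C_pos by (simp add: sum.distrib field_simps)
  finally show ?thesis unfolding y_def z_def .
qed

lemma star_local_closed:
  "star_local gr \<gamma> xs p m y n = y - \<gamma> *\<^sub>R (\<Sum>j<n. gr m (p j) xs)"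
  by (induction n) (simp_all add: algebra_simps)

lemma star_round_closed:
  assumes "\<omega> \<in> \<Omega>" "r \<le> R"
  shows "star_round gr \<gamma> xs N C \<omega> r = xs - (\<gamma> / real C) *\<^sub>R (\<Sum>r'<r. \<Sum>m\<in>cohort C (fst \<omega>) r'. \<Sum>j<N. gr m j xs)"
  using assms(2)
proof (induction r)
  case 0 then show ?case by simp
next
  case (Suc r)
  define A where "A = cohort C (fst \<omega>) r"
  have cA: "card A = C" unfolding A_def using cohort_card[OF assms(1)] .
  define z where "z = star_round gr \<gamma> xs N C \<omega> r"
  have perm: "(\<Sum>j<N. gr m (snd \<omega> m j) xs) = (\<Sum>j<N. gr m j xs)" if "m \<in> A" for m
  proof -
    have "m < M" using cohort_mem_lt[OF assms(1), of r m] that Suc.prems unfolding A_def by simp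
    from sum.permute[OF omega_pi[OF assms(1) this], of "\<lambda>j. gr m j xs"] show ?thesis by (simp add: comp_def)
  qed
  have "star_round gr \<gamma> xs N C \<omega> (Suc r) = (1 / real C) *\<^sub>R (\<Sum>m\<in>A. z - \<gamma> *\<^sub>R (\<Sum>j<N. gr m j xs))"
    by (simp add: A_def[symmetric] z_def[symmetric] star_local_closed perm cong: sum.cong)
  also have "\<dots> = z - (\<gamma> / real C) *\<^sub>R (\<Sum>m\<in>A. \<Sum>j<N. gr m j xs)"
    using C_pos by (simp add: sum_subtractf cA sum_constant_scaleR scaleR_diff_right scaleR_sum_right[symmetric])
  finally have st: "star_round gr \<gamma> xs N C \<omega> (Suc r) = z - (\<gamma> / real C) *\<^sub>R (\<Sum>m\<in>A. \<Sum>j<N. gr m j xs)" .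
  have IH: "z = xs - (\<gamma> / real C) *\<^sub>R (\<Sum>r'<r. \<Sum>m\<in>cohort C (fst \<omega>) r'. \<Sum>j<N. gr m j xs)"
    using Suc unfolding z_def by simp
  show ?case unfolding st IH A_def by (simp add: scaleR_right_distrib algebra_simps)
qed

lemma star_round_R: assumes "\<omega> \<in> \<Omega>" shows "star_round gr \<gamma> xs N C \<omega> R = xs"
  using star_round_closed[OF assms order.refl] cohort_sum[OF assms, of "\<lambda>m. \<Sum>j<N. gr m j xs"] gzero
  by simp

definition A where "A \<omega> = (\<Sum>r<R. (q^N)^(R - Suc r) * \<beta> \<omega> r)"

lemma epoch_bound:
  assumes "\<omega> \<in> \<Omega>"
  shows "(norm (epoch_step gr \<gamma> (\<gamma> * real N) (\<gamma> * real N * real R) N C R \<omega> x - xs))\<^sup>2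
     \<le> (q^N)^R * (norm (x - xs))\<^sup>2 + A \<omega>"
proof -
  have nz: "\<gamma> * real N * real R \<noteq> 0" using gamma_pos N_pos R_pos by simp
  have "epoch_step gr \<gamma> (\<gamma> * real N) (\<gamma> * real N * real R) N C R \<omega> x = round_iter gr \<gamma> (\<gamma> * real N) N C \<omega> x R"
    unfolding epoch_step_def using nz by simp
  moreover have "(norm (round_iter gr \<gamma> (\<gamma> * real N) N C \<omega> x R - star_round gr \<gamma> xs N C \<omega> R))\<^sup>2
     \<le> (q^N)^R * (norm (round_iter gr \<gamma> (\<gamma> * real N) N C \<omega> x 0 - star_round gr \<gamma> xs N C \<omega> 0))\<^sup>2
       + (\<Sum>r<R. (q^N)^(R - Suc r) * \<beta> \<omega> r)"
    by (rule rec_bound[OF zero_le_power[OF q_nonneg]]) (rule round_bound[OF assms])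
  ultimately show ?thesis using star_round_R[OF assms] unfolding A_def by simp
qed

lemma finite_Omega: "finite \<Omega>"
proof -
  have "\<Omega> \<subseteq> {\<sigma>. \<sigma> permutes {..<M}} \<times> {\<pi>. \<forall>x. (x \<in> {..<M} \<longrightarrow> \<pi> x \<in> {p. p permutes {..<N}}) \<and> (x \<notin> {..<M} \<longrightarrow> \<pi> x = id)}"
    unfolding \<Omega>_def epoch_outcomes_def by auto
  moreover have "finite \<dots>"
    by (intro finite_cartesian_product finite_set_of_finite_funs finite_permutations) auto
  ultimately show ?thesis by (rule finite_subset)
qed

lemma Omega_ne: "\<Omega> \<noteq> {}"
proof -
  have "(id, \<lambda>_. id) \<in> \<Omega>" unfolding \<Omega>_def epoch_outcomes_def by (auto simp: permutes_id)
  then show ?thesis by blast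
qed

lemma card_Omega: "card \<Omega> > 0" using finite_Omega Omega_ne by (simp add: card_gt_0_iff)


definition smax where
  "smax = Max {sigma2_DS f gr \<gamma> xs M N C m r j | m r j. r < R \<and> m < M \<and> j < N}"

lemma smax_ge: assumes "m < M" "r < R" "j < N" shows "sigma2_DS f gr \<gamma> xs M N C m r j \<le> smax"
proof -
  have eq: "{sigma2_DS f gr \<gamma> xs M N C m r j | m r j. r < R \<and> m < M \<and> j < N}
     = (\<lambda>(m, r, j). sigma2_DS f gr \<gamma> xs M N C m r j) ` ({..<M} \<times> {..<R} \<times> {..<N})"
  proof (intro set_eqI iffI)
    fix v assume "v \<in> {sigma2_DS f gr \<gamma> xs M N C m r j | m r j. r < R \<and> m < M \<and> j < N}"
    then obtain m r j where "v = sigma2_DS f gr \<gamma> xs M N C m r j" "r < R" "m < M" "j < N" by blast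
    then show "v \<in> (\<lambda>(m, r, j). sigma2_DS f gr \<gamma> xs M N C m r j) ` ({..<M} \<times> {..<R} \<times> {..<N})"
      by (intro image_eqI[where x="(m, r, j)"]) auto
  qed auto
  show ?thesis unfolding smax_def eq
    apply (rule Max_ge)
     apply simp
    apply (rule image_eqI[where x="(m, r, j)"])
    using assms by auto
qed

lemma D_nonneg: "\<omega> \<in> \<Omega> \<Longrightarrow> m < M \<Longrightarrow> j < N \<Longrightarrow> D \<omega> m r j \<ge> 0"
  unfolding D_def by (rule bregman_nonneg[OF sconv]) (use pi_lt mu_pos in auto)

lemma smax_nonneg: "smax \<ge> 0"
proof -
  have "0 \<le> sigma2_DS f gr \<gamma> xs M N C 0 0 0"
    unfolding sigma2_DS_def avg_def
    using D_nonneg[of _ 0 0 0] MCR C_pos R_pos N_pos unfolding D_def \<Omega>_def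
    by (intro mult_nonneg_nonneg divide_nonneg_nonneg sum_nonneg) auto
  also have "\<dots> \<le> smax" using MCR C_pos R_pos N_pos by (intro smax_ge) auto
  finally show ?thesis .
qed

lemma key:
  assumes r: "r < R" and j: "j < N"
  shows "(\<Sum>\<omega>\<in>\<Omega>. \<Sum>m\<in>cohort C (fst \<omega>) r. D \<omega> m r j) \<le> real (card \<Omega>) * real C * \<gamma>^2 * smax"
proof -
  define Om where "Om m = {\<omega> \<in> \<Omega>. m \<in> cohort C (fst \<omega>) r}" for m
  have s1: "(\<Sum>m\<in>cohort C (fst \<omega>) r. D \<omega> m r j) = (\<Sum>m<M. if m \<in> cohort C (fst \<omega>) r then D \<omega> m r j else 0)"
    if "\<omega> \<in> \<Omega>" for \<omega>
  proof -
    have "{..<M} \<inter> cohort C (fst \<omega>) r = cohort C (fst \<omega>) r" using cohort_sub[OF that r] by blast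
    then show ?thesis using sum.inter_restrict[of "{..<M}" "\<lambda>m. D \<omega> m r j" "cohort C (fst \<omega>) r"] by simp
  qed
  have "(\<Sum>\<omega>\<in>\<Omega>. \<Sum>m\<in>cohort C (fst \<omega>) r. D \<omega> m r j)
      = (\<Sum>\<omega>\<in>\<Omega>. \<Sum>m<M. if m \<in> cohort C (fst \<omega>) r then D \<omega> m r j else 0)"
    using s1 by (rule sum.cong[OF refl])
  also have "\<dots> = (\<Sum>m<M. \<Sum>\<omega>\<in>\<Omega>. if m \<in> cohort C (fst \<omega>) r then D \<omega> m r j else 0)"
    by (rule sum.swap)
  also have "\<dots> = (\<Sum>m<M. \<Sum>\<omega>\<in>Om m. D \<omega> m r j)"
    unfolding Om_def using finite_Omega by (simp add: sum.inter_filter)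
  also have "\<dots> = (\<Sum>m<M. real (card (Om m)) * \<gamma>^2 * sigma2_DS f gr \<gamma> xs M N C m r j)"
  proof (rule sum.cong[OF refl])
    fix m
    have fin: "finite (Om m)" unfolding Om_def using finite_Omega by simp
    show "(\<Sum>\<omega>\<in>Om m. D \<omega> m r j) = real (card (Om m)) * \<gamma>^2 * sigma2_DS f gr \<gamma> xs M N C m r j"
    proof (cases "card (Om m) = 0")
      case True
      then have "Om m = {}" using fin by simp
      then show ?thesis by simp
    next
      case False
      then show ?thesis using gamma_pos
        unfolding sigma2_DS_def avg_def Om_def[symmetric] \<Omega>_def[symmetric] D_def by simp
    qed
  qed
  also have "\<dots> \<le> (\<Sum>m<M. real (card (Om m)) * \<gamma>^2 * smax)"
    by (intro sum_mono mult_left_mono smax_ge) (use r j in auto)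
  also have "\<dots> = (\<Sum>m<M. real (card (Om m))) * \<gamma>^2 * smax"
    by (simp add: sum_distrib_right)
  also have "(\<Sum>m<M. real (card (Om m))) = real (card \<Omega>) * real C"
  proof -
    have "(\<Sum>m<M. real (card (Om m))) = (\<Sum>m<M. \<Sum>\<omega>\<in>\<Omega>. if m \<in> cohort C (fst \<omega>) r then 1 else 0)"
      unfolding Om_def using finite_Omega by (simp add: sum.inter_filter[symmetric])
    also have "\<dots> = (\<Sum>\<omega>\<in>\<Omega>. \<Sum>m<M. if m \<in> cohort C (fst \<omega>) r then 1 else 0)"
      by (rule sum.swap)
    also have "\<dots> = (\<Sum>\<omega>\<in>\<Omega>. real C)"
    proof (rule sum.cong[OF refl])
      fix \<omega> assume w: "\<omega> \<in> \<Omega>"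
      have "{..<M} \<inter> cohort C (fst \<omega>) r = cohort C (fst \<omega>) r" using cohort_sub[OF w r] by blast
      then show "(\<Sum>m<M. if m \<in> cohort C (fst \<omega>) r then 1 else 0) = real C"
        using cohort_card[OF w] sum.inter_restrict[of "{..<M}" "\<lambda>m. 1::real" "cohort C (fst \<omega>) r"] by simp
    qed
    finally show ?thesis by simp
  qed
  finally show ?thesis .
qed

lemma avg_sum: "finite I \<Longrightarrow> avg X (\<lambda>\<omega>. \<Sum>i\<in>I. F i \<omega>) = (\<Sum>i\<in>I. avg X (F i))"
  unfolding avg_def by (subst sum.swap) (simp add: sum_divide_distrib)

lemma avg_cmult: "avg X (\<lambda>\<omega>. c * F \<omega>) = c * avg X F"
  unfolding avg_def by (simp add: sum_distrib_left)

lemma avg_mono: "(\<And>\<omega>. \<omega> \<in> X \<Longrightarrow> F \<omega> \<le> G \<omega>) \<Longrightarrow> avg X F \<le> avg X G"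
  unfolding avg_def by (intro divide_right_mono sum_mono) auto

lemma avg_add_const: "finite X \<Longrightarrow> X \<noteq> {} \<Longrightarrow> avg X (\<lambda>\<omega>. c + F \<omega>) = c + avg X F"
  unfolding avg_def by (simp add: sum.distrib add_divide_distrib)

definition "K = 2 * \<gamma>^2 / \<mu> * smax"

lemma K_nonneg: "K \<ge> 0" unfolding K_def using smax_nonneg mu_pos by simp

lemma avg_beta:
  assumes r: "r < R"
  shows "avg \<Omega> (\<lambda>\<omega>. \<beta> \<omega> r) \<le> K * (1 - q^N)"
proof -
  define c where "c j = q^(N - Suc j) * (2 * \<gamma>)" for j
  have c0: "c j \<ge> 0" for j unfolding c_def using q_nonneg gamma_pos by simp
  have eq: "\<beta> \<omega> r = (1 / real C) * (\<Sum>j<N. c j * (\<Sum>m\<in>cohort C (fst \<omega>) r. D \<omega> m r j))" for \<omega>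
  proof -
    have "(\<Sum>m\<in>cohort C (fst \<omega>) r. \<Sum>j<N. c j * D \<omega> m r j) = (\<Sum>j<N. \<Sum>m\<in>cohort C (fst \<omega>) r. c j * D \<omega> m r j)"
      by (rule sum.swap)
    then show ?thesis unfolding \<beta>_def c_def by (simp add: sum_distrib_left mult.assoc)
  qed
  have "(\<Sum>\<omega>\<in>\<Omega>. \<beta> \<omega> r) = (1 / real C) * (\<Sum>\<omega>\<in>\<Omega>. \<Sum>j<N. c j * (\<Sum>m\<in>cohort C (fst \<omega>) r. D \<omega> m r j))"
    unfolding eq by (simp add: sum_distrib_left)
  also have "(\<Sum>\<omega>\<in>\<Omega>. \<Sum>j<N. c j * (\<Sum>m\<in>cohort C (fst \<omega>) r. D \<omega> m r j))
     = (\<Sum>j<N. \<Sum>\<omega>\<in>\<Omega>. c j * (\<Sum>m\<in>cohort C (fst \<omega>) r. D \<omega> m r j))" by (rule sum.swap)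
  also have "\<dots> = (\<Sum>j<N. c j * (\<Sum>\<omega>\<in>\<Omega>. \<Sum>m\<in>cohort C (fst \<omega>) r. D \<omega> m r j))"
    by (simp add: sum_distrib_left)
  finally have e1: "(\<Sum>\<omega>\<in>\<Omega>. \<beta> \<omega> r) = (1 / real C) * (\<Sum>j<N. c j * (\<Sum>\<omega>\<in>\<Omega>. \<Sum>m\<in>cohort C (fst \<omega>) r. D \<omega> m r j))" .
  have e2: "(\<Sum>j<N. c j * (\<Sum>\<omega>\<in>\<Omega>. \<Sum>m\<in>cohort C (fst \<omega>) r. D \<omega> m r j))
      \<le> (\<Sum>j<N. c j * (real (card \<Omega>) * real C * \<gamma>^2 * smax))"
    by (intro sum_mono mult_left_mono key r) (use c0 in auto)
  have "(\<Sum>\<omega>\<in>\<Omega>. \<beta> \<omega> r) \<le> (1 / real C) * (\<Sum>j<N. c j * (real (card \<Omega>) * real C * \<gamma>^2 * smax))"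
    unfolding e1 by (rule mult_left_mono[OF e2]) simp
  also have "\<dots> = real (card \<Omega>) * (2 * \<gamma>^3 * smax * (\<Sum>j<N. q^(N - Suc j)))"
    unfolding c_def using C_pos by (simp add: sum_distrib_left sum_distrib_right field_simps power3_eq_cube power2_eq_square)
  finally have "avg \<Omega> (\<lambda>\<omega>. \<beta> \<omega> r) \<le> 2 * \<gamma>^3 * smax * (\<Sum>j<N. q^(N - Suc j))"
    unfolding avg_def using card_Omega by (simp add: field_simps)
  also have "(\<Sum>j<N. q^(N - Suc j)) = (\<Sum>j<N. q^j)" by (rule sum.nat_diff_reindex)
  also have "2 * \<gamma>^3 * smax * (\<Sum>j<N. q^j) = K * ((1 - q) * (\<Sum>j<N. q^j))"
    unfolding K_def q_def using mu_pos by (simp add: power3_eq_cube power2_eq_square field_simps)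
  also have "(1 - q) * (\<Sum>j<N. q^j) = 1 - q^N" by (rule one_diff_power_eq[symmetric])
  finally show ?thesis .
qed

lemma avg_A: "avg \<Omega> A \<le> K * (1 - (q^N)^R)"
proof -
  have "avg \<Omega> A = (\<Sum>r<R. (q^N)^(R - Suc r) * avg \<Omega> (\<lambda>\<omega>. \<beta> \<omega> r))"
    unfolding A_def[abs_def] by (simp add: avg_sum avg_cmult)
  also have "\<dots> \<le> (\<Sum>r<R. (q^N)^(R - Suc r) * (K * (1 - q^N)))"
    by (intro sum_mono mult_left_mono avg_beta) (use q_nonneg in auto)
  also have "\<dots> = K * ((1 - q^N) * (\<Sum>r<R. (q^N)^(R - Suc r)))"
    by (simp add: sum_distrib_left sum_distrib_right mult.commute mult.left_commute)
  also have "(\<Sum>r<R. (q^N)^(R - Suc r)) = (\<Sum>r<R. (q^N)^r)" by (rule sum.nat_diff_reindex)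
  also have "(1 - q^N) * (\<Sum>r<R. (q^N)^r) = 1 - (q^N)^R" by (rule one_diff_power_eq[symmetric])
  finally show ?thesis .
qed


lemma rrcli_cong: "(\<And>t. t < n \<Longrightarrow> ws t = ws' t) \<Longrightarrow> rrcli g a b c N C R ws x0 n = rrcli g a b c N C R ws' x0 n"
  by (induction n) auto

definition "Q = (q^N)^R"

lemma Q_nonneg: "Q \<ge> 0" unfolding Q_def using q_nonneg by simp

lemma epoch_bound': "\<omega> \<in> \<Omega> \<Longrightarrow> (norm (epoch_step gr \<gamma> (\<gamma> * real N) (\<gamma> * real N * real R) N C R \<omega> x - xs))\<^sup>2
     \<le> Q * (norm (x - xs))\<^sup>2 + A \<omega>"
  unfolding Q_def by (rule epoch_bound)

lemma avg_A': "avg \<Omega> A \<le> K * (1 - Q)" unfolding Q_def by (rule avg_A)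

lemma resample:
  "avg (PiE {..<T} (\<lambda>_. \<Omega>)) (\<lambda>ws. (norm (rrcli gr \<gamma> (\<gamma> * real N) (\<gamma> * real N * real R) N C R ws x0 T - xs))\<^sup>2)
     \<le> Q^T * (norm (x0 - xs))\<^sup>2 + K * (1 - Q^T)"
proof (induction T)
  case 0
  then show ?case by (simp add: avg_def)
next
  case (Suc T)
  define P where "P = PiE {..<T} (\<lambda>_. \<Omega>)"
  define e where "e ws = (norm (rrcli gr \<gamma> (\<gamma> * real N) (\<gamma> * real N * real R) N C R ws x0 T - xs))\<^sup>2" for ws
  define F where "F ws = (norm (rrcli gr \<gamma> (\<gamma> * real N) (\<gamma> * real N * real R) N C R ws x0 (Suc T) - xs))\<^sup>2" for ws
  have finP: "finite P" unfolding P_def using finite_Omega by (simp add: finite_PiE)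
  have cP: "card P > 0" unfolding P_def using card_Omega by (simp add: card_PiE)
  have PS: "PiE {..<Suc T} (\<lambda>_. \<Omega>) = (\<lambda>(y, g). g(T := y)) ` (\<Omega> \<times> P)"
    unfolding P_def lessThan_Suc by (rule PiE_insert_eq)
  have inj: "inj_on (\<lambda>(y, g). g(T := y)) (\<Omega> \<times> P)"
    unfolding P_def by (rule inj_combinator) simp
  have cS: "card (PiE {..<Suc T} (\<lambda>_. \<Omega>)) = card \<Omega> * card P"
    unfolding PS using inj by (simp add: card_image card_cartesian_product)
  have Fe: "F (g(T := w)) \<le> Q * e g + A w" if "w \<in> \<Omega>" for g w
  proof -
    have "rrcli gr \<gamma> (\<gamma> * real N) (\<gamma> * real N * real R) N C R (g(T := w)) x0 T
        = rrcli gr \<gamma> (\<gamma> * real N) (\<gamma> * real N * real R) N C R g x0 T"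
      by (rule rrcli_cong) simp
    then show ?thesis unfolding F_def e_def using epoch_bound'[OF that] by simp
  qed
  have "(\<Sum>ws\<in>PiE {..<Suc T} (\<lambda>_. \<Omega>). F ws) = (\<Sum>(w, g)\<in>\<Omega> \<times> P. F (g(T := w)))"
    unfolding PS by (subst sum.reindex[OF inj]) (simp add: comp_def case_prod_beta)
  also have "\<dots> = (\<Sum>w\<in>\<Omega>. \<Sum>g\<in>P. F (g(T := w)))" by (rule sum.cartesian_product[symmetric])
  also have "\<dots> \<le> (\<Sum>w\<in>\<Omega>. \<Sum>g\<in>P. Q * e g + A w)"
    by (intro sum_mono Fe)
  also have "\<dots> = real (card \<Omega>) * Q * (\<Sum>g\<in>P. e g) + real (card P) * (\<Sum>w\<in>\<Omega>. A w)"
    by (simp add: sum.distrib sum_distrib_left sum_distrib_right mult.commute mult.left_commute)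
  finally have S: "(\<Sum>ws\<in>PiE {..<Suc T} (\<lambda>_. \<Omega>). F ws)
     \<le> real (card \<Omega>) * Q * (\<Sum>g\<in>P. e g) + real (card P) * (\<Sum>w\<in>\<Omega>. A w)" .
  have "avg (PiE {..<Suc T} (\<lambda>_. \<Omega>)) F \<le> (real (card \<Omega>) * Q * (\<Sum>g\<in>P. e g) + real (card P) * (\<Sum>w\<in>\<Omega>. A w)) / (real (card \<Omega>) * real (card P))"
    unfolding avg_def cS using S card_Omega cP by (simp add: divide_right_mono)
  also have "\<dots> = Q * avg P e + avg \<Omega> A"
    unfolding avg_def using card_Omega cP by (simp add: field_simps)
  also have "\<dots> \<le> Q * (Q^T * (norm (x0 - xs))\<^sup>2 + K * (1 - Q^T)) + K * (1 - Q)"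
    using Suc.IH avg_A' Q_nonneg unfolding P_def e_def by (intro add_mono mult_left_mono) auto
  also have "\<dots> = Q^Suc T * (norm (x0 - xs))\<^sup>2 + K * (1 - Q^Suc T)"
    by (simp add: algebra_simps)
  finally show ?case unfolding F_def .
qed

lemma reuse:
  "avg \<Omega> (\<lambda>\<omega>. (norm (rrcli gr \<gamma> (\<gamma> * real N) (\<gamma> * real N * real R) N C R (\<lambda>_. \<omega>) x0 T - xs))\<^sup>2)
     \<le> Q^T * (norm (x0 - xs))\<^sup>2 + K * (1 - Q^T)"
proof -
  define S where "S = (\<Sum>t<T. Q^(T - Suc t))"
  have S0: "S \<ge> 0" unfolding S_def using Q_nonneg by (simp add: sum_nonneg)
  have S1: "(1 - Q) * S = 1 - Q^T"
    unfolding S_def sum.nat_diff_reindex by (rule one_diff_power_eq[symmetric])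
  have pw: "(norm (rrcli gr \<gamma> (\<gamma> * real N) (\<gamma> * real N * real R) N C R (\<lambda>_. \<omega>) x0 T - xs))\<^sup>2
      \<le> Q^T * (norm (x0 - xs))\<^sup>2 + S * A \<omega>" if w: "\<omega> \<in> \<Omega>" for \<omega>
    using rec_bound[OF Q_nonneg, of T "\<lambda>n. (norm (rrcli gr \<gamma> (\<gamma> * real N) (\<gamma> * real N * real R) N C R (\<lambda>_. \<omega>) x0 n - xs))\<^sup>2"
        "\<lambda>_. A \<omega>"] epoch_bound'[OF w]
    unfolding S_def by (simp add: sum_distrib_right)
  have "avg \<Omega> (\<lambda>\<omega>. (norm (rrcli gr \<gamma> (\<gamma> * real N) (\<gamma> * real N * real R) N C R (\<lambda>_. \<omega>) x0 T - xs))\<^sup>2)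
      \<le> avg \<Omega> (\<lambda>\<omega>. Q^T * (norm (x0 - xs))\<^sup>2 + S * A \<omega>)"
    by (rule avg_mono) (rule pw)
  also have "\<dots> = Q^T * (norm (x0 - xs))\<^sup>2 + S * avg \<Omega> A"
    using finite_Omega Omega_ne by (simp add: avg_add_const avg_cmult)
  also have "\<dots> \<le> Q^T * (norm (x0 - xs))\<^sup>2 + S * (K * (1 - Q))"
    using avg_A' S0 by (intro add_left_mono mult_left_mono) auto
  also have "S * (K * (1 - Q)) = K * ((1 - Q) * S)" by (simp add: algebra_simps)
  also have "\<dots> = K * (1 - Q^T)" using S1 by simp
  finally show ?thesis .
qed



end


theorem theorem1:
  fixes f :: "nat \<Rightarrow> nat \<Rightarrow> 'a::euclidean_space \<Rightarrow> real"
    and gr :: "nat \<Rightarrow> nat \<Rightarrow> 'a \<Rightarrow> 'a"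
    and M N C R T :: nat
    and L \<mu> \<gamma> \<eta> \<theta> :: real
    and x0 xs :: 'a
  assumes MCR: "M = C * R" and C_pos: "C > 0" and R_pos: "R > 0" and N_pos: "N > 0"
    and T_pos: "T \<ge> 1"
    and grad: "\<And>m j x. m < M \<Longrightarrow> j < N \<Longrightarrow> GDERIV (f m j) x :> gr m j x"
    and smooth: "\<And>m j. m < M \<Longrightarrow> j < N \<Longrightarrow> L_smooth L (gr m j)"
    and sconv: "\<And>m j. m < M \<Longrightarrow> j < N \<Longrightarrow> strongly_convex_grad \<mu> (f m j) (gr m j)"
    and mu_pos: "\<mu> > 0"
    and xs_min: "\<And>y. (1 / real M) * (\<Sum>m<M. (1 / real N) * (\<Sum>j<N. f m j xs))
                  \<le> (1 / real M) * (\<Sum>m<M. (1 / real N) * (\<Sum>j<N. f m j y))"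
    and gamma_pos: "\<gamma> > 0" and gamma_le: "\<gamma> \<le> 1 / L"
    and eta_def: "\<eta> = \<gamma> * real N"
    and theta_def: "\<theta> = \<eta> * real R"
  shows
    \<comment> \<open>permutations resampled independently at every meta-epoch\<close>
    "avg (PiE {..<T} (\<lambda>_. epoch_outcomes M N))
         (\<lambda>ws. (norm (rrcli gr \<gamma> \<eta> \<theta> N C R ws x0 T - xs))\<^sup>2)
       \<le> (1 - \<gamma> * \<mu>) ^ (N * R * T) * (norm (x0 - xs))\<^sup>2
         + 2 * \<gamma>\<^sup>2 / \<mu> * Max {sigma2_DS f gr \<gamma> xs M N C m r j | m r j. r < R \<and> m < M \<and> j < N}
     \<and>
    \<comment> \<open>permutations sampled once before the first meta-epoch and reused\<close>
     avg (epoch_outcomes M N)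
         (\<lambda>\<omega>. (norm (rrcli gr \<gamma> \<eta> \<theta> N C R (\<lambda>_. \<omega>) x0 T - xs))\<^sup>2)
       \<le> (1 - \<gamma> * \<mu>) ^ (N * R * T) * (norm (x0 - xs))\<^sup>2
         + 2 * \<gamma>\<^sup>2 / \<mu> * Max {sigma2_DS f gr \<gamma> xs M N C m r j | m r j. r < R \<and> m < M \<and> j < N}"
  proof -
  have M0: "M > 0" using MCR C_pos R_pos by simp
  have L_pos: "L > 0"
  proof (rule ccontr)
    assume "\<not> L > 0"
    then have "1 / L \<le> 0" by simp
    then show False using gamma_pos gamma_le by linarith
  qed
  have muL: "\<mu> \<le> L" using mu_le_L[OF sconv[OF M0 N_pos] smooth[OF M0 N_pos]] .
  have gm: "\<gamma> * \<mu> \<le> 1"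
  proof -
    have "\<gamma> * \<mu> \<le> \<gamma> * L" using muL gamma_pos by simp
    also have "\<dots> \<le> 1" using gamma_le L_pos by (simp add: field_simps)
    finally show ?thesis .
  qed
  have gz: "(\<Sum>m<M. \<Sum>j<N. gr m j xs) = 0"
    by (rule grad_zero[OF grad smooth L_pos M0 N_pos xs_min]) auto
  interpret rr f gr M N C R L \<mu> \<gamma> xs
    by unfold_locales (use MCR C_pos R_pos N_pos grad smooth sconv mu_pos L_pos gamma_pos gamma_le gm gz in auto)
  have QT: "Q^T = (1 - \<gamma> * \<mu>) ^ (N * R * T)" unfolding Q_def q_def by (simp add: power_mult)
  have Kd: "K = 2 * \<gamma>\<^sup>2 / \<mu> * Max {sigma2_DS f gr \<gamma> xs M N C m r j | m r j. r < R \<and> m < M \<and> j < N}"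
    unfolding K_def smax_def ..
  have KQ: "K * (1 - Q^T) \<le> K" using K_nonneg Q_nonneg by (simp add: mult_left_le)
  have th: "\<theta> = \<gamma> * real N * real R" using theta_def eta_def by simp
  show ?thesis
    using resample[of T x0] reuse[of x0 T] KQ unfolding th eta_def \<Omega>_def QT Kd by linarith
qed

end
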